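(* Let $\mathcal{H}$ be a separable Hilbert space with a fixed orthonormal basis $\mathcal{B}=\{e_k\}_{k\in\mathbb{N}}$ and let $\mathcal{S}$ be a closed subspace of $\mathcal{H}$. The following are equivalent: (1) $\sup_{Q\in\mathcal{P}(\mathcal{D})}c[\mathcal{S},R(Q)]<1$ (i.e. $\mathcal{S}$ is $\mathcal{B}$-compatible); (2) $\sup_{Q\in\mathcal{P}_0(\mathcal{D})}c[\mathcal{S},R(Q)]<1$; (3) $\sup_{Q\in\mathcal{P}_{0,\mathcal{S}}(\mathcal{D})}c[\mathcal{S},R(Q)]<1$.
   Context: $\mathcal{D}$ is the algebra of bounded operators diagonal with respect to $\mathcal{B}$; $\mathcal{P}(\mathcal{D})$ is the set of orthogonal projections in $\mathcal{D}$; $\mathcal{P}_0(\mathcal{D})$ is the set of finite-rank elements of $\mathcal{P}(\mathcal{D})$; $\mathcal{P}_{0,\mathcal{S}}(\mathcal{D})=\{Q\in\mathcal{P}_0(\mathcal{D}):R(Q)\cap\mathcal{S}=\{0\}\}$. For closed subspaces $\mathcal{M},\mathcal{N}$, $c[\mathcal{M},\mathcal{N}]=\sup\{|\langle\xi,\eta\rangle|:\xi\in\mathcal{M}\ominus(\mathcal{M}\cap\mathcal{N}),\ \eta\in\mathcal{N}\ominus(\mathcal{M}\cap\mathcal{N}),\ \|\xi\|=\|\eta\|=1\}$ (cosine of the Friedrichs angle). *)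

theory Defs
  imports Complex_Main "HOL-Library.Function_Algebras"
begin

text \<open>The separable Hilbert space H with fixed orthonormal basis (e_k) indexed by the naturals
  is modelled (up to the unitary identifying e_k with the k-th standard unit vector) as
  complex l2(N): square-summable sequences nat => complex.\<close>

definition l2 :: "(nat \<Rightarrow> complex) set" where
  "l2 = {x. summable (\<lambda>k. (cmod (x k))\<^sup>2)}"

definition l2inner :: "(nat \<Rightarrow> complex) \<Rightarrow> (nat \<Rightarrow> complex) \<Rightarrow> complex" where
  "l2inner x y = (\<Sum>k. x k * cnj (y k))"

definition l2norm :: "(nat \<Rightarrow> complex) \<Rightarrow> real" where
  "l2norm x = sqrt (\<Sum>k. (cmod (x k))\<^sup>2)"

definition basis_vec :: "nat \<Rightarrow> (nat \<Rightarrow> complex)" where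
  "basis_vec j = (\<lambda>k. if k = j then 1 else 0)"

definition closed_subspace :: "(nat \<Rightarrow> complex) set \<Rightarrow> bool" where
  "closed_subspace S \<longleftrightarrow> S \<subseteq> l2 \<and> 0 \<in> S
     \<and> (\<forall>x\<in>S. \<forall>y\<in>S. x + y \<in> S)
     \<and> (\<forall>c::complex. \<forall>x\<in>S. (\<lambda>k. c * x k) \<in> S)
     \<and> (\<forall>X x. (\<forall>n. X n \<in> S) \<and> x \<in> l2 \<and> (\<lambda>n. l2norm (X n - x)) \<longlonglongrightarrow> 0 \<longrightarrow> x \<in> S)"

text \<open>Bounded linear operators on l2 (behaviour outside l2 is irrelevant).\<close>
definition bounded_op :: "((nat \<Rightarrow> complex) \<Rightarrow> (nat \<Rightarrow> complex)) \<Rightarrow> bool" where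
  "bounded_op T \<longleftrightarrow> (\<forall>x\<in>l2. T x \<in> l2)
     \<and> (\<forall>x\<in>l2. \<forall>y\<in>l2. T (x + y) = T x + T y)
     \<and> (\<forall>c::complex. \<forall>x\<in>l2. T (\<lambda>k. c * x k) = (\<lambda>k. c * T x k))
     \<and> (\<exists>C. \<forall>x\<in>l2. l2norm (T x) \<le> C * l2norm x)"

definition diagonal_op :: "((nat \<Rightarrow> complex) \<Rightarrow> (nat \<Rightarrow> complex)) \<Rightarrow> bool" where
  "diagonal_op T \<longleftrightarrow> bounded_op T
     \<and> (\<forall>i j. i \<noteq> j \<longrightarrow> l2inner (T (basis_vec j)) (basis_vec i) = 0)"

definition orth_proj :: "((nat \<Rightarrow> complex) \<Rightarrow> (nat \<Rightarrow> complex)) \<Rightarrow> bool" where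
  "orth_proj T \<longleftrightarrow> bounded_op T \<and> (\<forall>x\<in>l2. T (T x) = T x)
     \<and> (\<forall>x\<in>l2. \<forall>y\<in>l2. l2inner (T x) y = l2inner x (T y))"

definition op_range :: "((nat \<Rightarrow> complex) \<Rightarrow> (nat \<Rightarrow> complex)) \<Rightarrow> (nat \<Rightarrow> complex) set" where
  "op_range T = T ` l2"

definition finite_rank :: "((nat \<Rightarrow> complex) \<Rightarrow> (nat \<Rightarrow> complex)) \<Rightarrow> bool" where
  "finite_rank T \<longleftrightarrow> (\<exists>F. finite F \<and>
     op_range T \<subseteq> {(\<lambda>k. \<Sum>f\<in>F. a f * f k) | a. True})"

definition PD :: "((nat \<Rightarrow> complex) \<Rightarrow> (nat \<Rightarrow> complex)) set" where
  "PD = {Q. diagonal_op Q \<and> orth_proj Q}"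

definition P0D :: "((nat \<Rightarrow> complex) \<Rightarrow> (nat \<Rightarrow> complex)) set" where
  "P0D = {Q \<in> PD. finite_rank Q}"

definition P0SD :: "(nat \<Rightarrow> complex) set \<Rightarrow> ((nat \<Rightarrow> complex) \<Rightarrow> (nat \<Rightarrow> complex)) set" where
  "P0SD S = {Q \<in> P0D. op_range Q \<inter> S = {0}}"

definition orth_diff :: "(nat \<Rightarrow> complex) set \<Rightarrow> (nat \<Rightarrow> complex) set \<Rightarrow> (nat \<Rightarrow> complex) set" where
  "orth_diff M N = {x \<in> M. \<forall>y\<in>N. l2inner x y = 0}"

text \<open>Cosine of the Friedrichs angle; the supremum of the empty set is taken to be 0
  (all values are nonnegative, so inserting 0 is harmless otherwise).\<close>
definition friedrichs_cos :: "(nat \<Rightarrow> complex) set \<Rightarrow> (nat \<Rightarrow> complex) set \<Rightarrow> real" where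
  "friedrichs_cos M N = Sup (insert 0 {cmod (l2inner \<xi> \<eta>) | \<xi> \<eta>.
      \<xi> \<in> orth_diff M (M \<inter> N) \<and> \<eta> \<in> orth_diff N (M \<inter> N)
      \<and> l2norm \<xi> = 1 \<and> l2norm \<eta> = 1})"

end

theory Submission
  imports Defs "HOL-Analysis.L2_Norm"
begin

definition restr :: "nat set \<Rightarrow> (nat \<Rightarrow> complex) \<Rightarrow> (nat \<Rightarrow> complex)" where
  "restr J x = (\<lambda>i. if i \<in> J then x i else 0)"

definition RJ :: "nat set \<Rightarrow> (nat \<Rightarrow> complex) set" where
  "RJ J = {x \<in> l2. \<forall>i. i \<notin> J \<longrightarrow> x i = 0}"

definition nsq :: "(nat \<Rightarrow> complex) \<Rightarrow> real" where
  "nsq x = (\<Sum>k. (cmod (x k))\<^sup>2)"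

lemma l2norm_nsq: "l2norm x = sqrt (nsq x)"
  by (simp add: l2norm_def nsq_def)

lemma nsq_nonneg: "x \<in> l2 \<Longrightarrow> 0 \<le> nsq x"
  unfolding nsq_def l2_def by (auto intro: suminf_nonneg)

lemma fin_supp_l2:
  assumes "finite A" "\<And>i. i \<notin> A \<Longrightarrow> x i = 0"
  shows "x \<in> l2"
proof -
  have "summable (\<lambda>k. (cmod (x k))\<^sup>2)"
    by (rule summable_finite[OF assms(1)]) (use assms(2) in auto)
  thus ?thesis by (simp add: l2_def)
qed

lemma zero_l2: "(0::nat\<Rightarrow>complex) \<in> l2"
  by (rule fin_supp_l2[of "{}"]) auto

lemma restr_l2: "x \<in> l2 \<Longrightarrow> restr J x \<in> l2"
proof -
  assume "x \<in> l2"
  hence s: "summable (\<lambda>k. (cmod (x k))\<^sup>2)" by (simp add: l2_def)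
  have "summable (\<lambda>k. (cmod (restr J x k))\<^sup>2)"
    by (rule summable_comparison_test'[OF s, where N=0]) (auto simp: restr_def)
  thus ?thesis by (simp add: l2_def)
qed

lemma basis_l2: "basis_vec i \<in> l2"
  by (rule fin_supp_l2[of "{i}"]) (auto simp: basis_vec_def)

lemma summable_inner:
  assumes "x \<in> l2" "y \<in> l2"
  shows "summable (\<lambda>k. x k * cnj (y k))"
proof (rule summable_norm_cancel, rule summable_comparison_test)
  show "summable (\<lambda>k. (cmod (x k))\<^sup>2 + (cmod (y k))\<^sup>2)"
    using assms by (auto simp: l2_def intro: summable_add)
  show "\<exists>N. \<forall>n\<ge>N. norm (norm (x n * cnj (y n))) \<le> (cmod (x n))\<^sup>2 + (cmod (y n))\<^sup>2"
  proof (intro exI allI impI)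
    fix n
    have h: "0 \<le> (cmod (x n) - cmod (y n))\<^sup>2" by simp
    have h2: "0 \<le> cmod (x n) * cmod (y n)" by simp
    have "cmod (x n) * cmod (y n) \<le> (cmod (x n))\<^sup>2 + (cmod (y n))\<^sup>2"
      using h h2 unfolding power2_diff by linarith
    thus "norm (norm (x n * cnj (y n))) \<le> (cmod (x n))\<^sup>2 + (cmod (y n))\<^sup>2"
      by (simp add: norm_mult)
  qed
qed

lemma l2inner_basis: "l2inner x (basis_vec i) = x i"
proof -
  have "l2inner x (basis_vec i) = (\<Sum>k\<in>{i}. x k * cnj (basis_vec i k))"
    unfolding l2inner_def by (rule suminf_finite) (auto simp: basis_vec_def)
  thus ?thesis by (simp add: basis_vec_def)
qed

lemma inner_fin:
  assumes "finite A" "\<And>i. i \<notin> A \<Longrightarrow> y i = 0"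
  shows "l2inner x y = (\<Sum>k\<in>A. x k * cnj (y k))"
  unfolding l2inner_def by (rule suminf_finite) (use assms in auto)

lemma nsq_fin:
  assumes "finite A" "\<And>i. i \<notin> A \<Longrightarrow> y i = 0"
  shows "nsq y = (\<Sum>k\<in>A. (cmod (y k))\<^sup>2)"
  unfolding nsq_def by (rule suminf_finite) (use assms in auto)

lemma partial_le_nsq:
  assumes "x \<in> l2" "finite A"
  shows "(\<Sum>k\<in>A. (cmod (x k))\<^sup>2) \<le> nsq x"
  unfolding nsq_def by (rule sum_le_suminf) (use assms in \<open>auto simp: l2_def\<close>)

lemma nsq_add:
  assumes "x \<in> l2" "y \<in> l2"
  shows "nsq (x + y) = nsq x + nsq y + 2 * Re (l2inner x y)"
proof -
  have e: "\<And>k. (cmod ((x + y) k))\<^sup>2 = (cmod (x k))\<^sup>2 + (cmod (y k))\<^sup>2 + 2 * Re (x k * cnj (y k))"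
    by (simp add: cmod_power2) (simp add: power2_eq_square algebra_simps)
  have s1: "summable (\<lambda>k. (cmod (x k))\<^sup>2)" "summable (\<lambda>k. (cmod (y k))\<^sup>2)"
    using assms by (auto simp: l2_def)
  have s2: "summable (\<lambda>k. Re (x k * cnj (y k)))"
    using summable_Re[OF summable_inner[OF assms]] by simp
  define a where "a k = (cmod (x k))\<^sup>2" for k
  define b where "b k = (cmod (y k))\<^sup>2" for k
  define r where "r k = Re (x k * cnj (y k))" for k
  have sa: "summable a" unfolding a_def[abs_def] by (rule s1(1))
  have sb: "summable b" unfolding b_def[abs_def] by (rule s1(2))
  have sr: "summable r" unfolding r_def[abs_def] by (rule s2)
  have "nsq (x+y) = (\<Sum>k. a k + b k + 2 * r k)"
    unfolding nsq_def e a_def b_def r_def ..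
  also have "\<dots> = (\<Sum>k. a k + b k) + (\<Sum>k. 2 * r k)"
    by (rule suminf_add[symmetric]) (intro summable_add summable_mult sa sb sr)+
  also have "\<dots> = nsq x + nsq y + 2 * (\<Sum>k. r k)"
  proof -
    have nx: "nsq x = suminf a" and ny: "nsq y = suminf b"
      unfolding nsq_def a_def[abs_def] b_def[abs_def] by (rule refl)+
    show ?thesis by (simp only: nx ny suminf_add[OF sa sb, symmetric] suminf_mult[OF sr])
  qed
  also have "(\<Sum>k. r k) = Re (l2inner x y)"
    unfolding l2inner_def r_def by (rule Re_suminf[symmetric]) (rule summable_inner[OF assms])
  finally show ?thesis .
qed

lemma fin_CS:
  "cmod (\<Sum>k\<in>A. x k * cnj (y k)) \<le> sqrt (\<Sum>k\<in>A. (cmod (x k))\<^sup>2) * sqrt (\<Sum>k\<in>A. (cmod (y k))\<^sup>2)"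
proof -
  have "cmod (\<Sum>k\<in>A. x k * cnj (y k)) \<le> (\<Sum>k\<in>A. \<bar>cmod (x k)\<bar> * \<bar>cmod (y k)\<bar>)"
    by (rule order_trans[OF norm_sum]) (simp add: norm_mult)
  also have "\<dots> \<le> L2_set (\<lambda>k. cmod (x k)) A * L2_set (\<lambda>k. cmod (y k)) A"
    by (rule L2_set_mult_ineq)
  finally show ?thesis by (simp add: L2_set_def)
qed

lemma inner_bound:
  assumes "x \<in> l2" "y \<in> l2" "0 \<le> B"
    and "\<And>n. sqrt (\<Sum>k\<in>{..<n}. (cmod (x k))\<^sup>2) * sqrt (\<Sum>k\<in>{..<n}. (cmod (y k))\<^sup>2) \<le> B"
  shows "cmod (l2inner x y) \<le> B"
proof -
  have "(\<lambda>n. \<Sum>k<n. x k * cnj (y k)) \<longlonglongrightarrow> l2inner x y"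
    unfolding l2inner_def using summable_LIMSEQ[OF summable_inner[OF assms(1,2)]] .
  hence "(\<lambda>n. cmod (\<Sum>k<n. x k * cnj (y k))) \<longlonglongrightarrow> cmod (l2inner x y)"
    by (rule tendsto_norm)
  thus ?thesis
    by (rule LIMSEQ_le_const2) (use fin_CS order_trans assms(4) in blast)
qed

lemma CS:
  assumes "x \<in> l2" "y \<in> l2"
  shows "cmod (l2inner x y) \<le> l2norm x * l2norm y"
proof (rule inner_bound[OF assms])
  show "0 \<le> l2norm x * l2norm y" unfolding l2norm_nsq using nsq_nonneg assms by simp
  fix n
  show "sqrt (\<Sum>k\<in>{..<n}. (cmod (x k))\<^sup>2) * sqrt (\<Sum>k\<in>{..<n}. (cmod (y k))\<^sup>2) \<le> l2norm x * l2norm y"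
    unfolding l2norm_nsq
    by (rule mult_mono) (use partial_le_nsq assms nsq_nonneg in \<open>auto intro: sum_nonneg\<close>)
qed

lemma fc_bdd:
  assumes "M \<subseteq> l2" "N \<subseteq> l2"
  shows "\<forall>v \<in> insert 0 {cmod (l2inner \<xi> \<eta>) | \<xi> \<eta>.
      \<xi> \<in> orth_diff M (M \<inter> N) \<and> \<eta> \<in> orth_diff N (M \<inter> N)
      \<and> l2norm \<xi> = 1 \<and> l2norm \<eta> = 1}. v \<le> 1"
proof (clarsimp)
  fix \<xi> \<eta> assume h: "\<xi> \<in> orth_diff M (M \<inter> N)" "\<eta> \<in> orth_diff N (M \<inter> N)"
    "l2norm \<xi> = 1" "l2norm \<eta> = 1"
  hence "\<xi> \<in> l2" "\<eta> \<in> l2" using assms by (auto simp: orth_diff_def)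
  from CS[OF this] h show "cmod (l2inner \<xi> \<eta>) \<le> 1" by simp
qed

lemma fc_range:
  assumes "M \<subseteq> l2" "N \<subseteq> l2"
  shows "0 \<le> friedrichs_cos M N \<and> friedrichs_cos M N \<le> 1"
proof -
  note b = fc_bdd[OF assms]
  have bd: "bdd_above (insert 0 {cmod (l2inner \<xi> \<eta>) | \<xi> \<eta>.
      \<xi> \<in> orth_diff M (M \<inter> N) \<and> \<eta> \<in> orth_diff N (M \<inter> N)
      \<and> l2norm \<xi> = 1 \<and> l2norm \<eta> = 1})"
    by (intro bdd_aboveI[where M=1]) (use b in blast)
  show ?thesis unfolding friedrichs_cos_def
    apply (rule conjI)
     apply (rule cSup_upper[OF _ bd])
     apply simp
    apply (rule cSup_least)
    using b by auto
qed

lemma fc_upper: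
  assumes "M \<subseteq> l2" "N \<subseteq> l2" "\<xi> \<in> orth_diff M (M \<inter> N)" "\<eta> \<in> orth_diff N (M \<inter> N)"
      "l2norm \<xi> = 1" "l2norm \<eta> = 1"
  shows "cmod (l2inner \<xi> \<eta>) \<le> friedrichs_cos M N"
proof -
  note b = fc_bdd[OF assms(1,2)]
  have bd: "bdd_above (insert 0 {cmod (l2inner \<xi> \<eta>) | \<xi> \<eta>.
      \<xi> \<in> orth_diff M (M \<inter> N) \<and> \<eta> \<in> orth_diff N (M \<inter> N)
      \<and> l2norm \<xi> = 1 \<and> l2norm \<eta> = 1})"
    by (intro bdd_aboveI[where M=1]) (use b in blast)
  show ?thesis unfolding friedrichs_cos_def
    by (rule cSup_upper[OF _ bd]) (use assms in blast)
qed

lemma fc_least: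
  assumes "0 \<le> c"
    and "\<And>\<xi> \<eta>. \<xi> \<in> orth_diff M (M \<inter> N) \<Longrightarrow> \<eta> \<in> orth_diff N (M \<inter> N) \<Longrightarrow>
      l2norm \<xi> = 1 \<Longrightarrow> l2norm \<eta> = 1 \<Longrightarrow> cmod (l2inner \<xi> \<eta>) \<le> c"
  shows "friedrichs_cos M N \<le> c"
  unfolding friedrichs_cos_def
  by (rule cSup_least) (use assms in auto)

lemma PD_range:
  assumes "Q \<in> PD"
  shows "\<exists>J. op_range Q = RJ J"
proof -
  have bo: "bounded_op Q" and sa: "\<forall>x\<in>l2. \<forall>y\<in>l2. l2inner (Q x) y = l2inner x (Q y)"
    and idem: "\<forall>x\<in>l2. Q (Q x) = Q x"
    and dg: "\<forall>i j. i \<noteq> j \<longrightarrow> l2inner (Q (basis_vec j)) (basis_vec i) = 0"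
    using assms by (auto simp: PD_def diagonal_op_def orth_proj_def)
  have Ql2: "\<And>x. x \<in> l2 \<Longrightarrow> Q x \<in> l2" using bo by (simp add: bounded_op_def)
  define \<mu> where "\<mu> i = cnj (Q (basis_vec i) i)" for i
  have off: "Q (basis_vec i) k = 0" if "k \<noteq> i" for i k
    using dg that l2inner_basis by metis
  have form: "Q x i = x i * \<mu> i" if "x \<in> l2" for x i
  proof -
    have "Q x i = l2inner (Q x) (basis_vec i)" by (simp add: l2inner_basis)
    also have "\<dots> = l2inner x (Q (basis_vec i))" using sa that basis_l2 by blast
    also have "\<dots> = (\<Sum>k\<in>{i}. x k * cnj (Q (basis_vec i) k))"
      by (rule inner_fin) (use off in auto)
    finally show ?thesis by (simp add: \<mu>_def)
  qed
  have mu01: "\<mu> i = 0 \<or> \<mu> i = 1" for i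
  proof -
    have qi: "Q (basis_vec i) i = \<mu> i" using form[OF basis_l2] by (simp add: basis_vec_def)
    have "Q (Q (basis_vec i)) i = Q (basis_vec i) i * \<mu> i"
      using form[OF Ql2[OF basis_l2]] by simp
    hence "\<mu> i * \<mu> i = \<mu> i" using idem basis_l2 qi by metis
    thus ?thesis by (metis mult_cancel_right1 mult_eq_0_iff)
  qed
  define J where "J = {i. \<mu> i = 1}"
  have Qr: "Q x = restr J x" if "x \<in> l2" for x
  proof
    fix i show "Q x i = restr J x i" using form[OF that, of i] mu01[of i]
      by (auto simp: restr_def J_def)
  qed
  have "op_range Q = RJ J"
  proof
    show "op_range Q \<subseteq> RJ J"
      using Qr restr_l2 by (auto simp: op_range_def RJ_def restr_def)
    show "RJ J \<subseteq> op_range Q"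
    proof
      fix x assume x: "x \<in> RJ J"
      hence "x \<in> l2" "restr J x = x" by (auto simp: RJ_def restr_def)
      thus "x \<in> op_range Q" using Qr unfolding op_range_def by (metis image_eqI)
    qed
  qed
  thus ?thesis by blast
qed


lemma cs_facts:
  assumes "closed_subspace S"
  shows "S \<subseteq> l2" "0 \<in> S" "\<And>x y. x \<in> S \<Longrightarrow> y \<in> S \<Longrightarrow> x + y \<in> S"
    "\<And>c x. x \<in> S \<Longrightarrow> (\<lambda>k. c * x k) \<in> S"
  using assms unfolding closed_subspace_def by blast+

lemma RJ_l2: "RJ J \<subseteq> l2" by (auto simp: RJ_def)

lemma zero_RJ: "0 \<in> RJ J" using zero_l2 by (auto simp: RJ_def)

lemma inner_zero: "l2inner x 0 = 0" by (simp add: l2inner_def)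

lemma exists_k:
  assumes cs: "closed_subspace S" and fin: "finite J"
  shows "\<exists>k\<in>S \<inter> RJ J. \<exists>J'\<subseteq>J. S \<inter> RJ J' = {0} \<and> (\<forall>i\<in>J-J'. \<xi> i + k i = 0)"
  using fin
proof (induct J arbitrary: \<xi> rule: finite_psubset_induct)
  case (psubset J)
  note csf = cs_facts[OF cs]
  show ?case
  proof (cases "S \<inter> RJ J = {0}")
    case True
    have "(0::nat\<Rightarrow>complex) \<in> S \<inter> RJ J" using True by blast
    moreover have "\<forall>i\<in>J-J. \<xi> i + (0::nat\<Rightarrow>complex) i = 0" by simp
    ultimately show ?thesis using True by blast
  next
    case False
    have "0 \<in> S \<inter> RJ J" using csf zero_RJ by auto
    with False obtain z where z: "z \<in> S" "z \<in> RJ J" "z \<noteq> 0" by blast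
    have "\<exists>j. z j \<noteq> 0"
    proof (rule ccontr)
      assume "\<not> (\<exists>j. z j \<noteq> 0)"
      hence "z = 0" by (simp add: fun_eq_iff)
      thus False using z(3) by simp
    qed
    then obtain j where zj: "z j \<noteq> 0" by blast
    have jJ: "j \<in> J" using z(2) zj unfolding RJ_def by blast
    define a where "a = \<xi> j / z j"
    define \<xi>' where "\<xi>' = (\<lambda>i. \<xi> i - a * z i)"
    have "J - {j} \<subset> J" using jJ by blast
    from psubset.hyps(2)[OF this, of \<xi>'] obtain k' J'' where
      k': "k' \<in> S" "k' \<in> RJ (J - {j})" and J'': "J'' \<subseteq> J - {j}" "S \<inter> RJ J'' = {0}"
        "\<forall>i\<in>J - {j} - J''. \<xi>' i + k' i = 0" by blast
    define k where "k = k' + (\<lambda>i. (-a) * z i)"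
    have kS: "k \<in> S" unfolding k_def using csf(3)[OF k'(1) csf(4)[OF z(1)]] .
    have k'0: "k' i = 0" if "i \<notin> J - {j}" for i using k'(2) that unfolding RJ_def by blast
    have z0: "z i = 0" if "i \<notin> J" for i using z(2) that unfolding RJ_def by blast
    have "k i = 0" if "i \<notin> J" for i using k'0[of i] z0[of i] that by (simp add: k_def)
    hence kR: "k \<in> RJ J" using kS csf(1) unfolding RJ_def by blast
    have k'j: "k' j = 0" using k'0 by simp
    have "\<forall>i\<in>J-J''. \<xi> i + k i = 0"
    proof
      fix i assume i: "i \<in> J - J''"
      show "\<xi> i + k i = 0"
      proof (cases "i = j")
        case True thus ?thesis using zj k'j by (simp add: k_def a_def)
      next
        case False
        hence "\<xi>' i + k' i = 0" using J''(3) i by blast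
        thus ?thesis by (simp add: k_def \<xi>'_def algebra_simps)
      qed
    qed
    moreover have "J'' \<subseteq> J" using J''(1) by blast
    ultimately show ?thesis using kS kR J''(2) by blast
  qed
qed

lemma stepA:
  assumes cs: "closed_subspace S" and H: "friedrichs_cos S (RJ J') \<le> c"
    and fin: "finite J'" and triv: "S \<inter> RJ J' = {0}" and \<zeta>: "\<zeta> \<in> S"
  shows "(\<Sum>i\<in>J'. (cmod (\<zeta> i))\<^sup>2) \<le> c\<^sup>2 * nsq \<zeta>"
proof -
  note csf = cs_facts[OF cs]
  define p where "p = (\<Sum>i\<in>J'. (cmod (\<zeta> i))\<^sup>2)"
  have zl2: "\<zeta> \<in> l2" using \<zeta> csf by blast
  have p0: "0 \<le> p" unfolding p_def by (auto intro: sum_nonneg)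
  have pn: "p \<le> nsq \<zeta>" unfolding p_def by (rule partial_le_nsq[OF zl2 fin])
  show ?thesis
  proof (cases "p = 0")
    case True thus ?thesis using nsq_nonneg[OF zl2] by (simp add: p_def)
  next
    case False
    hence pp: "p > 0" using p0 by simp
    define a where "a = sqrt (nsq \<zeta>)"
    define b where "b = sqrt p"
    have ap: "a > 0" and bp: "b > 0" using pp pn by (auto simp: a_def b_def)
    have a2: "a\<^sup>2 = nsq \<zeta>" and b2: "b\<^sup>2 = p" using pp pn by (auto simp: a_def b_def)
    define \<xi> where "\<xi> = (\<lambda>k. complex_of_real (1/a) * \<zeta> k)"
    define \<eta> where "\<eta> = (\<lambda>k. complex_of_real (1/b) * restr J' \<zeta> k)"
    have \<xi>S: "\<xi> \<in> S" unfolding \<xi>_def using csf \<zeta> by blast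
    have \<eta>0: "\<eta> i = 0" if "i \<notin> J'" for i using that by (simp add: \<eta>_def restr_def)
    have \<eta>R: "\<eta> \<in> RJ J'" using fin_supp_l2[OF fin \<eta>0] \<eta>0 by (auto simp: RJ_def)
    have "nsq \<xi> = (\<Sum>k. (1/a)\<^sup>2 * (cmod (\<zeta> k))\<^sup>2)"
      unfolding nsq_def \<xi>_def using ap
      by (intro arg_cong[where f=suminf]) (simp add: fun_eq_iff norm_divide power_divide)
    also have "\<dots> = (1/a)\<^sup>2 * nsq \<zeta>"
      unfolding nsq_def by (rule suminf_mult) (use zl2 in \<open>simp add: l2_def\<close>)
    also have "\<dots> = 1" using a2[symmetric] ap by (simp add: field_simps)
    finally have n\<xi>: "l2norm \<xi> = 1" by (simp add: l2norm_nsq)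
    have "nsq \<eta> = (\<Sum>k\<in>J'. (cmod (\<eta> k))\<^sup>2)" by (rule nsq_fin[OF fin \<eta>0])
    also have "\<dots> = (\<Sum>k\<in>J'. (1/b)\<^sup>2 * (cmod (\<zeta> k))\<^sup>2)"
      using bp by (intro sum.cong) (auto simp: \<eta>_def restr_def norm_divide power_divide)
    also have "\<dots> = (1/b)\<^sup>2 * p" by (simp add: p_def sum_distrib_left)
    also have "\<dots> = 1" using b2[symmetric] bp by (simp add: field_simps)
    finally have n\<eta>: "l2norm \<eta> = 1" by (simp add: l2norm_nsq)
    have od1: "\<xi> \<in> orth_diff S (S \<inter> RJ J')" using \<xi>S triv by (simp add: orth_diff_def inner_zero)
    have od2: "\<eta> \<in> orth_diff (RJ J') (S \<inter> RJ J')" using \<eta>R triv by (simp add: orth_diff_def inner_zero)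
    have "l2inner \<xi> \<eta> = (\<Sum>k\<in>J'. \<xi> k * cnj (\<eta> k))" by (rule inner_fin[OF fin \<eta>0])
    also have "\<dots> = (\<Sum>k\<in>J'. complex_of_real (1/(a*b)) * complex_of_real ((cmod (\<zeta> k))\<^sup>2))"
    proof (rule sum.cong)
      fix k assume k: "k \<in> J'"
      show "\<xi> k * cnj (\<eta> k) = complex_of_real (1/(a*b)) * complex_of_real ((cmod (\<zeta> k))\<^sup>2)"
        unfolding complex_norm_square using k by (simp add: \<xi>_def \<eta>_def restr_def)
    qed simp
    also have "\<dots> = complex_of_real (p / (a*b))"
      by (simp add: p_def sum_distrib_left[symmetric] divide_inverse mult.commute)
    finally have li: "l2inner \<xi> \<eta> = complex_of_real (p / (a*b))" .
    have "cmod (l2inner \<xi> \<eta>) = p / (a*b)"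
      by (simp only: li norm_of_real, rule abs_of_nonneg) (use p0 ap bp in simp)
    also have "p / (a*b) = b / a" using b2 bp ap by (simp add: power2_eq_square field_simps)
    finally have "b / a \<le> c"
      using fc_upper[OF csf(1) RJ_l2 od1 od2 n\<xi> n\<eta>] H by simp
    hence "b \<le> c * a" using ap by (simp add: field_simps)
    hence "b\<^sup>2 \<le> (c*a)\<^sup>2" using bp by (intro power_mono) auto
    thus ?thesis using a2 b2 by (simp add: p_def power_mult_distrib)
  qed
qed


lemma stepB:
  assumes cs: "closed_subspace S"
    and H: "\<And>J'. finite J' \<Longrightarrow> S \<inter> RJ J' = {0} \<Longrightarrow> friedrichs_cos S (RJ J') \<le> c"
    and c1: "c\<^sup>2 \<le> 1"
    and fin: "finite J" and \<xi>: "\<xi> \<in> S" and orth: "\<forall>z\<in>S \<inter> RJ J. l2inner \<xi> z = 0"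
  shows "(\<Sum>i\<in>J. (cmod (\<xi> i))\<^sup>2) \<le> c\<^sup>2 * nsq \<xi>"
proof -
  note csf = cs_facts[OF cs]
  obtain k J' where k: "k \<in> S" "k \<in> RJ J" and J': "J' \<subseteq> J" "S \<inter> RJ J' = {0}"
    and van: "\<forall>i\<in>J-J'. \<xi> i + k i = 0"
    using exists_k[OF cs fin, where \<xi>=\<xi>] by blast
  have finJ': "finite J'" using J'(1) fin finite_subset by blast
  define w where "w = \<xi> + k"
  have wS: "w \<in> S" unfolding w_def using csf \<xi> k by blast
  have A: "(\<Sum>i\<in>J'. (cmod (w i))\<^sup>2) \<le> c\<^sup>2 * nsq w"
    by (rule stepA[OF cs H[OF finJ' J'(2)] finJ' J'(2) wS])
  have "(\<Sum>i\<in>J. (cmod (w i))\<^sup>2) = (\<Sum>i\<in>J'. (cmod (w i))\<^sup>2)"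
    by (rule sum.mono_neutral_right[OF fin J'(1)]) (use van in \<open>auto simp: w_def\<close>)
  have k0: "k i = 0" if "i \<notin> J" for i using k(2) that by (auto simp: RJ_def)
  have ik: "l2inner \<xi> k = 0" using orth k by blast
  have ik2: "(\<Sum>i\<in>J. \<xi> i * cnj (k i)) = 0" using inner_fin[OF fin k0, where x=\<xi>] ik by simp
  have "(\<Sum>i\<in>J. (cmod (w i))\<^sup>2) = (\<Sum>i\<in>J. (cmod (\<xi> i))\<^sup>2 + (cmod (k i))\<^sup>2 + 2 * Re (\<xi> i * cnj (k i)))"
    by (rule sum.cong) (simp_all add: w_def cmod_power2, simp add: power2_eq_square algebra_simps)
  also have "\<dots> = (\<Sum>i\<in>J. (cmod (\<xi> i))\<^sup>2) + (\<Sum>i\<in>J. (cmod (k i))\<^sup>2) + 2 * Re (\<Sum>i\<in>J. \<xi> i * cnj (k i))"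
    by (simp add: sum.distrib sum_distrib_left Re_sum)
  also have "\<dots> = (\<Sum>i\<in>J. (cmod (\<xi> i))\<^sup>2) + nsq k"
    using ik2 nsq_fin[OF fin k0] by simp
  finally have L: "(\<Sum>i\<in>J. (cmod (\<xi> i))\<^sup>2) + nsq k \<le> c\<^sup>2 * nsq w"
    using A \<open>(\<Sum>i\<in>J. (cmod (w i))\<^sup>2) = (\<Sum>i\<in>J'. (cmod (w i))\<^sup>2)\<close> by simp
  have "nsq w = nsq \<xi> + nsq k"
    using nsq_add[of \<xi> k] csf \<xi> k ik by (auto simp: w_def)
  moreover have "c\<^sup>2 * nsq k \<le> nsq k"
  proof -
    have nk: "0 \<le> nsq k" using nsq_nonneg[of k] k csf by blast
    show ?thesis using mult_right_mono[OF c1 nk] by simp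
  qed
  ultimately show ?thesis using L by (simp add: algebra_simps)
qed

lemma stepC:
  assumes cs: "closed_subspace S"
    and H: "\<And>J'. finite J' \<Longrightarrow> S \<inter> RJ J' = {0} \<Longrightarrow> friedrichs_cos S (RJ J') \<le> c"
    and c0: "0 \<le> c" and c1: "c \<le> 1"
    and \<xi>: "\<xi> \<in> orth_diff S (S \<inter> RJ J)" and \<eta>: "\<eta> \<in> RJ J"
    and n1: "l2norm \<xi> = 1" and n2: "l2norm \<eta> = 1"
  shows "cmod (l2inner \<xi> \<eta>) \<le> c"
proof -
  note csf = cs_facts[OF cs]
  have \<xi>S: "\<xi> \<in> S" and orth: "\<forall>z\<in>S \<inter> RJ J. l2inner \<xi> z = 0" using \<xi> by (auto simp: orth_diff_def)
  have xl: "\<xi> \<in> l2" using \<xi>S csf by blast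
  have yl: "\<eta> \<in> l2" using \<eta> by (auto simp: RJ_def)
  have \<eta>0: "\<eta> i = 0" if "i \<notin> J" for i using \<eta> that by (auto simp: RJ_def)
  have nx: "nsq \<xi> = 1" using n1 nsq_nonneg[OF xl] by (simp add: l2norm_nsq)
  have ny: "nsq \<eta> = 1" using n2 nsq_nonneg[OF yl] by (simp add: l2norm_nsq)
  have c21: "c\<^sup>2 \<le> 1" using c0 c1 by (simp add: power_le_one)
  have "(\<lambda>n. \<Sum>k<n. \<xi> k * cnj (\<eta> k)) \<longlonglongrightarrow> l2inner \<xi> \<eta>"
    unfolding l2inner_def using summable_LIMSEQ[OF summable_inner[OF xl yl]] .
  hence T: "(\<lambda>n. cmod (\<Sum>k<n. \<xi> k * cnj (\<eta> k))) \<longlonglongrightarrow> cmod (l2inner \<xi> \<eta>)"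
    by (rule tendsto_norm)
  show ?thesis
  proof (rule LIMSEQ_le_const2[OF T], intro exI allI impI)
    fix n
    define A where "A = J \<inter> {..<n}"
    have finA: "finite A" by (simp add: A_def)
    have "(\<Sum>k<n. \<xi> k * cnj (\<eta> k)) = (\<Sum>k\<in>A. \<xi> k * cnj (\<eta> k))"
    proof (rule sum.mono_neutral_right)
      show "A \<subseteq> {..<n}" by (auto simp: A_def)
      show "\<forall>i\<in>{..<n} - A. \<xi> i * cnj (\<eta> i) = 0"
      proof
        fix i assume "i \<in> {..<n} - A"
        hence "i \<notin> J" by (auto simp: A_def)
        thus "\<xi> i * cnj (\<eta> i) = 0" by (simp add: \<eta>0)
      qed
    qed simp 
    hence "cmod (\<Sum>k<n. \<xi> k * cnj (\<eta> k)) \<le> sqrt (\<Sum>k\<in>A. (cmod (\<xi> k))\<^sup>2) * sqrt (\<Sum>k\<in>A. (cmod (\<eta> k))\<^sup>2)"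
      using fin_CS by simp
    also have "\<dots> \<le> sqrt (c\<^sup>2) * sqrt 1"
    proof (rule mult_mono)
      have "RJ A \<subseteq> RJ J" by (auto simp: RJ_def A_def)
      hence "\<forall>z\<in>S \<inter> RJ A. l2inner \<xi> z = 0" using orth by blast
      from stepB[OF cs H c21 finA \<xi>S this] nx
      have "(\<Sum>k\<in>A. (cmod (\<xi> k))\<^sup>2) \<le> c\<^sup>2" by simp
      thus "sqrt (\<Sum>k\<in>A. (cmod (\<xi> k))\<^sup>2) \<le> sqrt (c\<^sup>2)" by (rule real_sqrt_le_mono)
      show "sqrt (\<Sum>k\<in>A. (cmod (\<eta> k))\<^sup>2) \<le> sqrt 1"
        using partial_le_nsq[OF yl finA] ny by simp
    qed (auto intro: sum_nonneg)
    also have "\<dots> = c" using c0 by simp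
    finally show "cmod (\<Sum>k<n. \<xi> k * cnj (\<eta> k)) \<le> c" .
  qed
qed

lemma inj_basis: "inj basis_vec"
proof (rule injI)
  fix i j assume "basis_vec i = basis_vec j"
  hence "basis_vec i i = basis_vec j i" by simp
  thus "i = j" by (simp add: basis_vec_def split: if_splits)
qed

lemma restr_PD:
  assumes fin: "finite J"
  shows "restr J \<in> P0D" "op_range (restr J) = RJ J"
proof -
  have bo: "bounded_op (restr J)"
    unfolding bounded_op_def
  proof (intro conjI ballI allI exI)
    fix x assume x: "x \<in> l2"
    show "restr J x \<in> l2" by (rule restr_l2[OF x])
    have "nsq (restr J x) \<le> nsq x" unfolding nsq_def
      by (rule suminf_le) (use x restr_l2[OF x] in \<open>auto simp: l2_def restr_def\<close>)
    thus "l2norm (restr J x) \<le> 1 * l2norm x" by (simp add: l2norm_nsq)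
  next
    fix x y show "restr J (x + y) = restr J x + restr J y" by (auto simp: restr_def fun_eq_iff)
  next
    fix c :: complex and x show "restr J (\<lambda>k. c * x k) = (\<lambda>k. c * restr J x k)"
      by (auto simp: restr_def fun_eq_iff)
  qed
  have dg: "diagonal_op (restr J)"
    unfolding diagonal_op_def using bo by (auto simp: l2inner_basis) (auto simp: restr_def basis_vec_def)
  have op: "orth_proj (restr J)"
    unfolding orth_proj_def
  proof (intro conjI ballI bo)
    fix x show "restr J (restr J x) = restr J x" by (simp add: restr_def fun_eq_iff)
  next
    fix x y
    have "(\<lambda>k. restr J x k * cnj (y k)) = (\<lambda>k. x k * cnj (restr J y k))"
      by (auto simp: restr_def fun_eq_iff)
    thus "l2inner (restr J x) y = l2inner x (restr J y)" by (simp add: l2inner_def)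
  qed
  have fr: "finite_rank (restr J)"
    unfolding finite_rank_def
  proof (intro exI conjI)
    show "finite (basis_vec ` J)" using fin by simp
    show "op_range (restr J) \<subseteq> {\<lambda>k. \<Sum>f\<in>basis_vec ` J. a f * f k |a. True}"
    proof
      fix v assume "v \<in> op_range (restr J)"
      then obtain x where v: "v = restr J x" by (auto simp: op_range_def)
      have "(\<lambda>k. \<Sum>f\<in>basis_vec ` J. l2inner x f * f k) = (\<lambda>k. \<Sum>i\<in>J. x i * basis_vec i k)"
        by (subst sum.reindex) (auto intro: inj_on_subset[OF inj_basis] simp: l2inner_basis)
      also have "\<dots> = restr J x"
        using fin by (auto simp: fun_eq_iff restr_def basis_vec_def if_distrib cong: if_cong)
      finally have calc: "(\<lambda>k. \<Sum>f\<in>basis_vec ` J. l2inner x f * f k) = restr J x" .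
      show "v \<in> {\<lambda>k. \<Sum>f\<in>basis_vec ` J. a f * f k |a. True}"
        unfolding mem_Collect_eq by (rule exI[of _ "\<lambda>f. l2inner x f"]) (use calc v in simp)
    qed
  qed
  show "restr J \<in> P0D" using bo dg op fr by (simp add: P0D_def PD_def)
  show "op_range (restr J) = RJ J"
  proof
    show "op_range (restr J) \<subseteq> RJ J" using restr_l2 by (auto simp: op_range_def RJ_def restr_def)
    show "RJ J \<subseteq> op_range (restr J)"
    proof
      fix x assume x: "x \<in> RJ J"
      hence "x \<in> l2" "restr J x = x" by (auto simp: RJ_def restr_def fun_eq_iff)
      thus "x \<in> op_range (restr J)" unfolding op_range_def by (metis image_eqI)
    qed
  qed
qed


theorem proposition4p15:
  assumes "closed_subspace S"
  shows "((SUP Q\<in>PD. friedrichs_cos S (op_range Q)) < 1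
            \<longleftrightarrow> (SUP Q\<in>P0D. friedrichs_cos S (op_range Q)) < 1)
       \<and> ((SUP Q\<in>P0D. friedrichs_cos S (op_range Q)) < 1
            \<longleftrightarrow> (SUP Q\<in>P0SD S. friedrichs_cos S (op_range Q)) < 1)"
proof -
  note cs = assms
  note csf = cs_facts[OF cs]
  define g where "g Q = friedrichs_cos S (op_range Q)" for Q
  have sub1: "P0SD S \<subseteq> P0D" and sub2: "P0D \<subseteq> PD" by (auto simp: P0SD_def P0D_def)
  have rng: "0 \<le> g Q \<and> g Q \<le> 1" if "Q \<in> PD" for Q
  proof -
    have "op_range Q \<subseteq> l2" using that by (auto simp: PD_def diagonal_op_def bounded_op_def op_range_def)
    thus ?thesis unfolding g_def by (rule fc_range[OF csf(1)])
  qed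
  have R0: "RJ {} = {0}" by (auto simp: RJ_def fun_eq_iff zero_l2)
  have e0: "restr {} \<in> P0SD S"
    using restr_PD[of "{}"] R0 csf(2) by (auto simp: P0SD_def)
  have ne: "P0SD S \<noteq> {}" "P0D \<noteq> {}" "PD \<noteq> {}" using e0 sub1 sub2 by auto
  have bdPD: "bdd_above (g ` PD)" by (rule bdd_aboveI[where M=1]) (use rng in auto)
  have bdP0D: "bdd_above (g ` P0D)" by (rule bdd_aboveI[where M=1]) (use rng sub2 in auto)
  have bdP0SD: "bdd_above (g ` P0SD S)" by (rule bdd_aboveI[where M=1]) (use rng sub1 sub2 in auto)
  define c where "c = (SUP Q\<in>P0SD S. g Q)"
  have c0: "0 \<le> c" unfolding c_def
    using rng[of "restr {}"] e0 sub1 sub2 cSUP_upper[OF e0 bdP0SD] by auto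
  have c1: "c \<le> 1" unfolding c_def
    by (rule cSUP_least[OF ne(1)]) (use rng sub1 sub2 in auto)
  have H: "friedrichs_cos S (RJ J') \<le> c" if "finite J'" "S \<inter> RJ J' = {0}" for J'
  proof -
    have "restr J' \<in> P0SD S" using restr_PD[OF that(1)] that(2) by (auto simp: P0SD_def)
    hence "g (restr J') \<le> c" unfolding c_def by (rule cSUP_upper[OF _ bdP0SD])
    thus ?thesis using restr_PD[OF that(1)] by (simp add: g_def)
  qed
  have allPD: "g Q \<le> c" if QPD: "Q \<in> PD" for Q
  proof -
    obtain J where J: "op_range Q = RJ J" using PD_range[OF QPD] by blast
    have "friedrichs_cos S (RJ J) \<le> c"
    proof (rule fc_least[OF c0])
      fix \<xi> \<eta> assume "\<xi> \<in> orth_diff S (S \<inter> RJ J)" "\<eta> \<in> orth_diff (RJ J) (S \<inter> RJ J)"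
        "l2norm \<xi> = 1" "l2norm \<eta> = 1"
      moreover hence "\<eta> \<in> RJ J" by (simp add: orth_diff_def)
      ultimately show "cmod (l2inner \<xi> \<eta>) \<le> c" using stepC[OF cs H c0 c1] by blast
    qed
    thus ?thesis by (simp add: g_def J)
  qed
  have s1: "(SUP Q\<in>PD. g Q) \<le> c" by (rule cSUP_least[OF ne(3)]) (use allPD in auto)
  have s2: "c \<le> (SUP Q\<in>P0D. g Q)" unfolding c_def
    by (rule cSUP_subset_mono[OF ne(1) bdP0D sub1]) simp
  have s3: "(SUP Q\<in>P0D. g Q) \<le> (SUP Q\<in>PD. g Q)"
    by (rule cSUP_subset_mono[OF ne(2) bdPD sub2]) simp
  have "(SUP Q\<in>PD. g Q) = c" "(SUP Q\<in>P0D. g Q) = c" using s1 s2 s3 by auto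
  thus ?thesis unfolding g_def[abs_def] c_def by simp
qed

end
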